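(* Let $(\Omega,\mathcal{F},\mu)$ be a probability space and $\mathcal{C},\mathcal{G},\mathcal{H}$ sub-$\sigma$-algebras of $\mathcal{F}$ with $\mathcal{C}\subset\mathcal{G}$ and $\mathcal{C}\subset\mathcal{H}$. Let $f$ be an $\mathcal{H}$-measurable function with $|f|\le g$ a.e. for some (finite-valued) $\mathcal{C}$-measurable function $g$. Then, almost everywhere, $$\mathbb{E}\big[\,|\mathbb{E}[f|\mathcal{G}]-\mathbb{E}[f|\mathcal{C}]|\,\big|\,\mathcal{C}\big]\le 4\,\alpha_{\mathcal{C}}(\mathcal{G},\mathcal{H})\,g.$$
   Context: Functions are identified when equal a.e. Conditional expectations are understood in the generalized sense: for $f$ with $|f|\le g$, $g$ $\mathcal{C}$-measurable and $\mathcal{C}\subset\mathcal{G}$, $\mathbb{E}[f|\mathcal{G}]:=\lim_{n\to\infty}\mathbb{E}[f\mathbb{I}_{\{g\le n\}}|\mathcal{G}]$ a.e., and for nonnegative measurable $h$, $\mathbb{E}[h|\mathcal{C}]$ is defined by monotone convergence. The $\mathcal{C}$-conditioned strong mixing coefficient is $$\alpha_{\mathcal{C}}(\mathcal{G},\mathcal{H}):=\sup\{|\mathbb{E}[\mathbb{I}_A\mathbb{I}_B|\mathcal{C}]-\mathbb{E}[\mathbb{I}_A|\mathcal{C}]\,\mathbb{E}[\mathbb{I}_B|\mathcal{C}]| : A\in\mathcal{G},\ B\in\mathcal{H}\},$$ the supremum being the (essential) supremum in the lattice of a.e.-classes of measurable functions. *)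

theory Defs
  imports "HOL-Probability.Probability"
begin

definition trunc_fun :: "('a \<Rightarrow> real) \<Rightarrow> ('a \<Rightarrow> real) \<Rightarrow> nat \<Rightarrow> 'a \<Rightarrow> real" where
  "trunc_fun g f n = (\<lambda>x. f x * indicator {y. g y \<le> real n} x)"

text \<open>Generalized conditional expectation E[f|G] := lim_n E[f 1_{g<=n} | G] (pointwise,
  where the limit exists; set to 0 on the (null) set where it does not).\<close>
definition gen_cond_exp :: "'a measure \<Rightarrow> 'a measure \<Rightarrow> ('a \<Rightarrow> real) \<Rightarrow> ('a \<Rightarrow> real) \<Rightarrow> 'a \<Rightarrow> real" where
  "gen_cond_exp M G g f x =
     (if convergent (\<lambda>n. real_cond_exp M G (trunc_fun g f n) x)
      then lim (\<lambda>n. real_cond_exp M G (trunc_fun g f n) x) else 0)"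

definition cond_mix_dev :: "'a measure \<Rightarrow> 'a measure \<Rightarrow> 'a set \<Rightarrow> 'a set \<Rightarrow> 'a \<Rightarrow> real" where
  "cond_mix_dev M C A B x =
     \<bar>real_cond_exp M C (\<lambda>y. indicator A y * indicator B y) x
       - real_cond_exp M C (indicator A) x * real_cond_exp M C (indicator B) x\<bar>"

text \<open>h is the supremum of the family in the lattice of a.e.-classes of measurable functions.\<close>
definition is_cond_alpha :: "'a measure \<Rightarrow> 'a measure \<Rightarrow> 'a measure \<Rightarrow> 'a measure \<Rightarrow> ('a \<Rightarrow> real) \<Rightarrow> bool" where
  "is_cond_alpha M C G H h \<longleftrightarrow>
     h \<in> borel_measurable M \<and>
     (\<forall>A\<in>sets G. \<forall>B\<in>sets H. AE x in M. cond_mix_dev M C A B x \<le> h x) \<and>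
     (\<forall>h'\<in>borel_measurable M.
        (\<forall>A\<in>sets G. \<forall>B\<in>sets H. AE x in M. cond_mix_dev M C A B x \<le> h' x)
        \<longrightarrow> (AE x in M. h x \<le> h' x))"

definition cond_alpha :: "'a measure \<Rightarrow> 'a measure \<Rightarrow> 'a measure \<Rightarrow> 'a measure \<Rightarrow> 'a \<Rightarrow> real" where
  "cond_alpha M C G H = (SOME h. is_cond_alpha M C G H h)"

end

theory Submission
  imports Defs
begin


lemma ess_sup_exists:
  fixes M :: "'a measure" and F :: "('a \<Rightarrow> real) set"
  assumes P: "prob_space M" and Fne: "F \<noteq> {}"
    and Fm: "\<And>f. f \<in> F \<Longrightarrow> f \<in> borel_measurable M"
    and Fb: "\<And>f. f \<in> F \<Longrightarrow> AE x in M. 0 \<le> f x \<and> f x \<le> 1"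
  shows "\<exists>h\<in>borel_measurable M. (\<forall>f\<in>F. AE x in M. f x \<le> h x) \<and>
     (\<forall>h'\<in>borel_measurable M. (\<forall>f\<in>F. AE x in M. f x \<le> h' x) \<longrightarrow> (AE x in M. h x \<le> h' x))"
proof -
  interpret prob_space M by (rule P)
  define cl where "cl f = (\<lambda>x. max 0 (min 1 (f x)))" for f :: "'a \<Rightarrow> real"
  define sp where "sp S = (\<lambda>x. SUP f\<in>S. cl f x)" for S
  have clb: "0 \<le> cl f x" "cl f x \<le> 1" for f x unfolding cl_def by auto
  have bdd: "bdd_above ((\<lambda>f. cl f x) ` S)" for S x
    using clb by (intro bdd_aboveI[of _ 1]) auto
  have clm: "f \<in> F \<Longrightarrow> cl f \<in> borel_measurable M" for f
    unfolding cl_def using Fm by measurable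
  have cleq: "AE x in M. cl f x = f x" if "f \<in> F" for f
    using Fb[OF that] by eventually_elim (auto simp: cl_def)
  have spm: "countable S \<Longrightarrow> S \<subseteq> F \<Longrightarrow> sp S \<in> borel_measurable M" for S
    unfolding sp_def by (rule borel_measurable_cSUP) (auto intro: clm bdd)
  have spb: "S \<noteq> {} \<Longrightarrow> 0 \<le> sp S x \<and> sp S x \<le> 1" for S x
  proof -
    assume "S \<noteq> {}"
    then obtain f where "f \<in> S" by auto
    have "0 \<le> cl f x" by (rule clb)
    also have "\<dots> \<le> sp S x" unfolding sp_def using \<open>f\<in>S\<close> by (intro cSUP_upper bdd)
    finally show ?thesis using \<open>S \<noteq> {}\<close> clb unfolding sp_def by (auto intro: cSUP_least)
  qed
  have spu: "f \<in> S \<Longrightarrow> cl f x \<le> sp S x" for f S x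
    unfolding sp_def by (intro cSUP_upper bdd)
  have spmono: "S \<noteq> {} \<Longrightarrow> S \<subseteq> T \<Longrightarrow> sp S x \<le> sp T x" for S T x
    unfolding sp_def by (rule cSUP_subset_mono) (auto intro: bdd)
  have spi: "countable S \<Longrightarrow> S \<subseteq> F \<Longrightarrow> S \<noteq> {} \<Longrightarrow> integrable M (sp S)" for S
    by (rule integrable_const_bound[where B=1]) (use spb spm in auto)
  define V where "V = {integral\<^sup>L M (sp S) | S. countable S \<and> S \<noteq> {} \<and> S \<subseteq> F}"
  obtain f0 where "f0 \<in> F" using Fne by auto
  hence Vne: "V \<noteq> {}" unfolding V_def by (auto intro!: exI[of _ "{f0}"])
  have Vb: "v \<le> 1" if "v \<in> V" for v
  proof -
    from that obtain S where S: "countable S" "S \<noteq> {}" "S \<subseteq> F" "v = integral\<^sup>L M (sp S)"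
      unfolding V_def by auto
    have "integral\<^sup>L M (sp S) \<le> integral\<^sup>L M (\<lambda>_. 1::real)"
      by (rule integral_mono) (use S spi spb in auto)
    thus ?thesis using S by (simp add: prob_space)
  qed
  hence bV: "bdd_above V" by (intro bdd_aboveI[of _ 1]) auto
  define c where "c = Sup V"
  have "\<forall>n::nat. \<exists>S. countable S \<and> S \<noteq> {} \<and> S \<subseteq> F \<and> c - 1 / real (Suc n) < integral\<^sup>L M (sp S)"
  proof
    fix n :: nat
    have "c - 1 / real (Suc n) < c" by simp
    then obtain v where "v \<in> V" "c - 1 / real (Suc n) < v"
      unfolding c_def using less_cSupE[OF _ Vne] by blast
    thus "\<exists>S. countable S \<and> S \<noteq> {} \<and> S \<subseteq> F \<and> c - 1 / real (Suc n) < integral\<^sup>L M (sp S)"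
      unfolding V_def by auto
  qed
  then obtain Sn where Sn: "\<And>n. countable (Sn n)" "\<And>n. Sn n \<noteq> {}" "\<And>n. Sn n \<subseteq> F"
    "\<And>n. c - 1 / real (Suc n) < integral\<^sup>L M (sp (Sn n))"
    by metis
  define T where "T = (\<Union>n. Sn n)"
  have T: "countable T" "T \<noteq> {}" "T \<subseteq> F" unfolding T_def using Sn(1,2,3) by auto
  have cle: "c \<le> integral\<^sup>L M (sp T)"
  proof (rule ccontr)
    assume "\<not> ?thesis"
    then obtain m where m: "m > 0" "inverse (real m) < c - integral\<^sup>L M (sp T)"
      using ex_inverse_of_nat_less[of "c - integral\<^sup>L M (sp T)"] by auto
    then obtain n where "m = Suc n" using not0_implies_Suc by blast
    with m have n: "1 / real (Suc n) < c - integral\<^sup>L M (sp T)" by (simp add: inverse_eq_divide)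
    have "integral\<^sup>L M (sp (Sn n)) \<le> integral\<^sup>L M (sp T)"
      by (rule integral_mono) (use Sn T spi in \<open>auto simp: T_def intro!: spmono\<close>)
    with Sn(4)[of n] n show False by linarith
  qed
  have maxT: "integral\<^sup>L M (sp S) \<le> integral\<^sup>L M (sp T)" if "countable S" "S \<noteq> {}" "S \<subseteq> F" for S
  proof -
    have "integral\<^sup>L M (sp S) \<in> V" unfolding V_def using that by auto
    hence "integral\<^sup>L M (sp S) \<le> c" unfolding c_def using bV by (rule cSup_upper)
    with cle show ?thesis by linarith
  qed
  show ?thesis
  proof (intro bexI conjI ballI impI)
    show "sp T \<in> borel_measurable M" using spm T by auto
    fix f assume f: "f \<in> F"
    define S' where "S' = insert f T"
    have S': "countable S'" "S' \<noteq> {}" "S' \<subseteq> F" using T f unfolding S'_def by auto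
    have ge: "sp T x \<le> sp S' x" for x using T by (intro spmono) (auto simp: S'_def)
    have int0: "integral\<^sup>L M (\<lambda>x. sp S' x - sp T x) = 0"
    proof -
      have "integral\<^sup>L M (\<lambda>x. sp S' x - sp T x) = integral\<^sup>L M (sp S') - integral\<^sup>L M (sp T)"
        using spi S' T by (intro Bochner_Integration.integral_diff) auto
      moreover have "0 \<le> integral\<^sup>L M (\<lambda>x. sp S' x - sp T x)"
        using ge by (intro integral_nonneg_AE) auto
      ultimately show ?thesis using maxT[OF S'] by linarith
    qed
    have "AE x in M. sp S' x - sp T x = 0"
      using int0 spi S' T ge by (subst integral_nonneg_eq_0_iff_AE[symmetric]) auto
    thus "AE x in M. f x \<le> sp T x"
      using cleq[OF f]
    proof eventually_elim
      case (elim x)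
      have "cl f x \<le> sp S' x" by (rule spu) (simp add: S'_def)
      thus ?case using elim by simp
    qed
  next
    fix h' assume h': "(\<forall>f\<in>F. AE x in M. f x \<le> h' x)"
    have "AE x in M. \<forall>f\<in>T. cl f x \<le> h' x"
    proof (subst AE_ball_countable[OF T(1)], intro ballI)
      fix f assume "f \<in> T"
      hence "f \<in> F" using T by auto
      with h' cleq[OF this] show "AE x in M. cl f x \<le> h' x" by auto
    qed
    thus "AE x in M. sp T x \<le> h' x"
      by eventually_elim (unfold sp_def, use T in \<open>auto intro: cSUP_least\<close>)
  qed
qed




locale cset = prob_space M for M :: "'a measure" +
  fixes C G H :: "'a measure"
  assumes subC: "subalgebra M C" and subG: "subalgebra M G" and subH: "subalgebra M H"
    and CG: "sets C \<subseteq> sets G" and CH: "sets C \<subseteq> sets H"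
begin

lemma sfC: "sigma_finite_subalgebra M C"
  by (rule finite_measure_subalgebra_is_sigma_finite, rule finite_measure_subalgebra.intro,
      rule finite_measure_axioms, rule finite_measure_subalgebra_axioms.intro, rule subC)
lemma sfG: "sigma_finite_subalgebra M G"
  by (rule finite_measure_subalgebra_is_sigma_finite, rule finite_measure_subalgebra.intro,
      rule finite_measure_axioms, rule finite_measure_subalgebra_axioms.intro, rule subG)

lemma spaceC: "space C = space M" using subC by (simp add: subalgebra_def)
lemma spaceG: "space G = space M" using subG by (simp add: subalgebra_def)
lemma spaceH: "space H = space M" using subH by (simp add: subalgebra_def)
lemma setsGM: "A \<in> sets G \<Longrightarrow> A \<in> sets M" using subG unfolding subalgebra_def by blast
lemma setsHM: "A \<in> sets H \<Longrightarrow> A \<in> sets M" using subH unfolding subalgebra_def by blast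
lemma setsCM: "A \<in> sets C \<Longrightarrow> A \<in> sets M" using subC unfolding subalgebra_def by blast

lemma subGC: "subalgebra G C"
  using CG spaceC spaceG by (simp add: subalgebra_def)
lemma subHC: "subalgebra H C"
  using CH spaceC spaceH by (simp add: subalgebra_def)

lemma mCG: "f \<in> borel_measurable C \<Longrightarrow> f \<in> borel_measurable G"
  by (rule measurable_from_subalg[OF subGC])
lemma mCH: "f \<in> borel_measurable C \<Longrightarrow> f \<in> borel_measurable H"
  by (rule measurable_from_subalg[OF subHC])
lemma mCM: "f \<in> borel_measurable C \<Longrightarrow> f \<in> borel_measurable M"
  by (rule measurable_from_subalg[OF subC])
lemma mGM: "f \<in> borel_measurable G \<Longrightarrow> f \<in> borel_measurable M"
  by (rule measurable_from_subalg[OF subG])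
lemma mHM: "f \<in> borel_measurable H \<Longrightarrow> f \<in> borel_measurable M"
  by (rule measurable_from_subalg[OF subH])

abbreviation "EC \<equiv> real_cond_exp M C"
abbreviation "EG \<equiv> real_cond_exp M G"

definition cov :: "('a \<Rightarrow> real) \<Rightarrow> ('a \<Rightarrow> real) \<Rightarrow> 'a \<Rightarrow> real" where
  "cov a b x = EC (\<lambda>y. a y * b y) x - EC a x * EC b x"

definition bd :: "('a \<Rightarrow> real) \<Rightarrow> bool" where
  "bd f \<longleftrightarrow> f \<in> borel_measurable M \<and> (\<exists>K. AE x in M. \<bar>f x\<bar> \<le> K)"

lemma bdI: "f \<in> borel_measurable M \<Longrightarrow> AE x in M. \<bar>f x\<bar> \<le> K \<Longrightarrow> bd f"
  unfolding bd_def by auto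

lemma bd_int: assumes "bd f" shows "integrable M f"
proof -
  obtain K where K: "AE x in M. \<bar>f x\<bar> \<le> K" "f \<in> borel_measurable M" using assms unfolding bd_def by blast
  show ?thesis by (rule integrable_const_bound[of f K]) (use K in \<open>simp_all add: real_norm_def\<close>)
qed

lemma bd_meas: "bd f \<Longrightarrow> f \<in> borel_measurable M"
  unfolding bd_def by auto

lemma bd_mult: assumes "bd f" "bd g" shows "bd (\<lambda>x. f x * g x)"
proof -
  obtain K1 K2 where K: "AE x in M. \<bar>f x\<bar> \<le> K1" "AE x in M. \<bar>g x\<bar> \<le> K2"
    using assms unfolding bd_def by blast
  have "AE x in M. \<bar>f x * g x\<bar> \<le> K1 * K2"
    using K
  proof eventually_elim
    case (elim x)
    show ?case unfolding abs_mult by (rule mult_mono') (use elim in simp_all)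
  qed
  thus ?thesis by (rule bdI[OF borel_measurable_times[OF bd_meas[OF assms(1)] bd_meas[OF assms(2)]]])
qed

lemma bd_add: assumes "bd f" "bd g" shows "bd (\<lambda>x. f x + g x)"
proof -
  obtain K1 K2 where K: "AE x in M. \<bar>f x\<bar> \<le> K1" "AE x in M. \<bar>g x\<bar> \<le> K2"
    using assms unfolding bd_def by blast
  have "AE x in M. \<bar>f x + g x\<bar> \<le> K1 + K2"
    using K
  proof eventually_elim
    case (elim x)
    show ?case using abs_triangle_ineq[of "f x" "g x"] elim by linarith
  qed
  thus ?thesis by (rule bdI[OF borel_measurable_add[OF bd_meas[OF assms(1)] bd_meas[OF assms(2)]]])
qed

lemma bd_diff: assumes "bd f" "bd g" shows "bd (\<lambda>x. f x - g x)"
proof -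
  obtain K1 K2 where K: "AE x in M. \<bar>f x\<bar> \<le> K1" "AE x in M. \<bar>g x\<bar> \<le> K2"
    using assms unfolding bd_def by blast
  have "AE x in M. \<bar>f x - g x\<bar> \<le> K1 + K2"
    using K
  proof eventually_elim
    case (elim x)
    show ?case using abs_triangle_ineq4[of "f x" "g x"] elim by linarith
  qed
  thus ?thesis by (rule bdI[OF borel_measurable_diff[OF bd_meas[OF assms(1)] bd_meas[OF assms(2)]]])
qed

lemma bd_const: "bd (\<lambda>_. c)"
  by (rule bdI[where K="\<bar>c\<bar>"]) simp_all

lemma bd_ind: "A \<in> sets M \<Longrightarrow> bd (indicator A)"
  by (rule bdI[where K=1]) simp_all

lemma bd_cmult: "bd f \<Longrightarrow> bd (\<lambda>x. c * f x)"
  by (rule bd_mult[OF bd_const])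

lemma EC_bound: assumes "integrable M f" "AE x in M. \<bar>f x\<bar> \<le> c"
  shows "AE x in M. \<bar>EC f x\<bar> \<le> c"
proof -
  interpret sigma_finite_subalgebra M C by (rule sfC)
  have "AE x in M. EC f x \<le> c" using assms by (intro real_cond_exp_le_c) auto
  moreover have "AE x in M. EC f x \<ge> -c" using assms by (intro real_cond_exp_ge_c) auto
  ultimately show ?thesis by eventually_elim auto
qed

lemma EG_bound: assumes "integrable M f" "AE x in M. \<bar>f x\<bar> \<le> c"
  shows "AE x in M. \<bar>EG f x\<bar> \<le> c"
proof -
  interpret sigma_finite_subalgebra M G by (rule sfG)
  have "AE x in M. EG f x \<le> c" using assms by (intro real_cond_exp_le_c) auto
  moreover have "AE x in M. EG f x \<ge> -c" using assms by (intro real_cond_exp_ge_c) auto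
  ultimately show ?thesis by eventually_elim auto
qed

lemma bd_EC: assumes "bd f" shows "bd (EC f)"
proof -
  obtain K where K: "AE x in M. \<bar>f x\<bar> \<le> K" using assms unfolding bd_def by auto
  show ?thesis by (rule bdI[OF borel_measurable_cond_exp2 EC_bound[OF bd_int[OF assms] K]])
qed

lemma bd_EG: assumes "bd f" shows "bd (EG f)"
proof -
  obtain K where K: "AE x in M. \<bar>f x\<bar> \<le> K" using assms unfolding bd_def by auto
  show ?thesis by (rule bdI[OF borel_measurable_cond_exp2 EG_bound[OF bd_int[OF assms] K]])
qed

lemma cov_cong: assumes "AE x in M. b x = b' x" "bd a" "bd b" "bd b'"
  shows "AE x in M. cov a b x = cov a b' x"
proof -
  interpret sigma_finite_subalgebra M C by (rule sfC)
  have "AE x in M. EC b x = EC b' x" using assms by (intro real_cond_exp_cong) (auto intro: bd_meas)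
  moreover have "AE x in M. EC (\<lambda>y. a y * b y) x = EC (\<lambda>y. a y * b' y) x"
    using assms by (intro real_cond_exp_cong) (auto intro: bd_meas bd_mult)
  ultimately show ?thesis unfolding cov_def by eventually_elim auto
qed

lemma cov_diff2: assumes "bd a" "bd b" "bd b'"
  shows "AE x in M. cov a (\<lambda>y. b y - b' y) x = cov a b x - cov a b' x"
proof -
  interpret sigma_finite_subalgebra M C by (rule sfC)
  have "AE x in M. EC (\<lambda>y. b y - b' y) x = EC b x - EC b' x"
    using assms by (intro real_cond_exp_diff bd_int)
  moreover have "AE x in M. EC (\<lambda>y. a y * b y - a y * b' y) x = EC (\<lambda>y. a y * b y) x - EC (\<lambda>y. a y * b' y) x"
    using assms by (intro real_cond_exp_diff bd_int bd_mult)
  ultimately show ?thesis unfolding cov_def by eventually_elim (simp add: right_diff_distrib)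
qed

lemma cov_cmult2: assumes "bd a" "bd b"
  shows "AE x in M. cov a (\<lambda>y. c * b y) x = c * cov a b x"
proof -
  interpret sigma_finite_subalgebra M C by (rule sfC)
  have "AE x in M. EC (\<lambda>y. c * b y) x = c * EC b x"
    using assms by (intro real_cond_exp_cmult bd_int)
  moreover have "AE x in M. EC (\<lambda>y. c * (a y * b y)) x = c * EC (\<lambda>y. a y * b y) x"
    using assms by (intro real_cond_exp_cmult bd_int bd_mult)
  ultimately show ?thesis unfolding cov_def by eventually_elim (simp add: algebra_simps)
qed

lemma cov_const2: assumes "bd a"
  shows "AE x in M. cov a (\<lambda>y. c) x = 0"
proof -
  interpret sigma_finite_subalgebra M C by (rule sfC)
  have "AE x in M. EC (\<lambda>y. c) x = c"
    by (intro real_cond_exp_F_meas bd_int bd_const) auto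
  moreover have "AE x in M. EC (\<lambda>y. c * a y) x = c * EC a x"
    using assms by (intro real_cond_exp_cmult bd_int)
  ultimately show ?thesis unfolding cov_def by eventually_elim (simp add: algebra_simps)
qed

lemma cov_Cmult2: assumes "bd a" "bd b" "bd g" "g \<in> borel_measurable C"
  shows "AE x in M. cov a (\<lambda>y. g y * b y) x = g x * cov a b x"
proof -
  interpret sigma_finite_subalgebra M C by (rule sfC)
  have "AE x in M. EC (\<lambda>y. g y * b y) x = g x * EC b x"
    using assms by (intro real_cond_exp_mult bd_int bd_mult bd_meas)
  moreover have "AE x in M. EC (\<lambda>y. g y * (a y * b y)) x = g x * EC (\<lambda>y. a y * b y) x"
    using assms by (intro real_cond_exp_mult bd_int bd_mult bd_meas)
  ultimately show ?thesis unfolding cov_def by eventually_elim (simp add: algebra_simps)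
qed

lemma cov_bound: assumes "bd a" "bd d" "AE x in M. \<bar>a x\<bar> \<le> 1" "AE x in M. \<bar>d x\<bar> \<le> e"
  shows "AE x in M. \<bar>cov a d x\<bar> \<le> 2 * e"
proof -
  have "AE x in M. \<bar>a x * d x\<bar> \<le> e" using assms(3,4)
  proof eventually_elim
    case (elim x)
    have "\<bar>a x\<bar> * \<bar>d x\<bar> \<le> 1 * e" using elim by (intro mult_mono) auto
    thus ?case by (simp add: abs_mult)
  qed
  hence 1: "AE x in M. \<bar>EC (\<lambda>y. a y * d y) x\<bar> \<le> e" using assms by (intro EC_bound bd_int bd_mult)
  have 2: "AE x in M. \<bar>EC a x\<bar> \<le> 1" using assms by (intro EC_bound bd_int)
  have 3: "AE x in M. \<bar>EC d x\<bar> \<le> e" using assms by (intro EC_bound bd_int)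
  show ?thesis using 1 2 3 unfolding cov_def
  proof eventually_elim
    case (elim x)
    have "\<bar>EC a x * EC d x\<bar> \<le> 1 * e" unfolding abs_mult using elim
      by (intro mult_mono) auto
    moreover have "\<bar>EC (\<lambda>y. a y * d y) x - EC a x * EC d x\<bar> \<le> \<bar>EC (\<lambda>y. a y * d y) x\<bar> + \<bar>EC a x * EC d x\<bar>"
      by (rule abs_triangle_ineq4)
    ultimately show ?case using elim by linarith
  qed
qed

end



lemma floor_count:
  fixes t :: real and k :: nat
  assumes "0 \<le> t" "t \<le> real k"
  shows "(\<Sum>j\<in>{1..k}. if real j \<le> t then 1 else (0::real)) = of_int \<lfloor>t\<rfloor>"
proof -
  have eq: "{j\<in>{1..k}. real j \<le> t} = {1..nat \<lfloor>t\<rfloor>}"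
  proof (intro set_eqI iffI)
    fix j assume "j \<in> {j\<in>{1..k}. real j \<le> t}"
    thus "j \<in> {1..nat \<lfloor>t\<rfloor>}" using le_nat_floor by auto
  next
    fix j assume j: "j \<in> {1..nat \<lfloor>t\<rfloor>}"
    have "real j \<le> real (nat \<lfloor>t\<rfloor>)" using j by auto
    also have "\<dots> = of_int \<lfloor>t\<rfloor>" using assms by simp
    also have "\<dots> \<le> t" by simp
    finally have "real j \<le> t" .
    thus "j \<in> {j\<in>{1..k}. real j \<le> t}" using j assms by auto
  qed
  have "(\<Sum>j\<in>{1..k}. if real j \<le> t then 1 else (0::real)) = (\<Sum>j\<in>{j\<in>{1..k}. real j \<le> t}. 1)"
    by (rule sum.inter_filter[symmetric]) simp
  also have "\<dots> = real (nat \<lfloor>t\<rfloor>)" unfolding eq by simp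
  also have "\<dots> = of_int \<lfloor>t\<rfloor>" using assms by simp
  finally show ?thesis .
qed

context cset
begin

abbreviation "alpha \<equiv> cond_alpha M C G H"

lemma EC01: assumes "bd f" "AE x in M. 0 \<le> f x \<and> f x \<le> 1"
  shows "AE x in M. 0 \<le> EC f x \<and> EC f x \<le> 1"
proof -
  interpret sigma_finite_subalgebra M C by (rule sfC)
  have "AE x in M. EC f x \<le> 1" using assms by (intro real_cond_exp_le_c bd_int) auto
  moreover have "AE x in M. EC f x \<ge> 0" using assms by (intro real_cond_exp_ge_c bd_int) auto
  ultimately show ?thesis by eventually_elim auto
qed

lemma dev_cov: "cond_mix_dev M C A B x = \<bar>cov (indicator A) (indicator B) x\<bar>"
  unfolding cond_mix_dev_def cov_def by simp

lemma alpha_ex: "is_cond_alpha M C G H alpha"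
proof -
  define F where "F = {cond_mix_dev M C A B | A B. A \<in> sets G \<and> B \<in> sets H}"
  have "\<exists>h\<in>borel_measurable M. (\<forall>f\<in>F. AE x in M. f x \<le> h x) \<and>
     (\<forall>h'\<in>borel_measurable M. (\<forall>f\<in>F. AE x in M. f x \<le> h' x) \<longrightarrow> (AE x in M. h x \<le> h' x))"
  proof (rule ess_sup_exists)
    show "prob_space M" by (rule prob_space_axioms)
    have "cond_mix_dev M C {} {} \<in> F" unfolding F_def by blast
    thus "F \<noteq> {}" by blast
  next
    fix f assume "f \<in> F"
    then obtain A B where AB: "A \<in> sets G" "B \<in> sets H" "f = cond_mix_dev M C A B"
      unfolding F_def by auto
    show "f \<in> borel_measurable M" unfolding AB(3) cond_mix_dev_def by measurable
    have sA: "A \<in> sets M" "B \<in> sets M" "A \<inter> B \<in> sets M" using AB setsGM setsHM by auto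
    have 1: "AE x in M. 0 \<le> EC (indicator A) x \<and> EC (indicator A) x \<le> 1"
      using sA by (intro EC01 bd_ind) auto
    have 2: "AE x in M. 0 \<le> EC (indicator B) x \<and> EC (indicator B) x \<le> 1"
      using sA by (intro EC01 bd_ind) auto
    have 3: "AE x in M. 0 \<le> EC (\<lambda>y. indicator A y * indicator B y) x \<and> EC (\<lambda>y. indicator A y * indicator B y) x \<le> 1"
      using sA by (intro EC01 bd_mult bd_ind) (auto simp: indicator_def)
    show "AE x in M. 0 \<le> f x \<and> f x \<le> 1" using 1 2 3 unfolding AB(3) cond_mix_dev_def
    proof eventually_elim
      case (elim x)
      have p1: "EC (indicator A) x * EC (indicator B) x \<le> 1 * 1" using elim by (intro mult_mono) auto
      have p0: "0 \<le> EC (indicator A) x * EC (indicator B) x" using elim by auto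
      have "\<bar>EC (\<lambda>y. indicator A y * indicator B y) x - EC (indicator A) x * EC (indicator B) x\<bar> \<le> 1"
        unfolding abs_le_iff using elim p0 p1 by linarith
      thus ?case by simp
    qed
  qed
  then obtain h where h: "h \<in> borel_measurable M" "\<forall>f\<in>F. AE x in M. f x \<le> h x"
     "\<forall>h'\<in>borel_measurable M. (\<forall>f\<in>F. AE x in M. f x \<le> h' x) \<longrightarrow> (AE x in M. h x \<le> h' x)"
    by blast
  have mem: "cond_mix_dev M C A B \<in> F" if "A \<in> sets G" "B \<in> sets H" for A B
    unfolding F_def using that by blast
  have "is_cond_alpha M C G H h"
    unfolding is_cond_alpha_def
  proof (intro conjI ballI impI)
    show "h \<in> borel_measurable M" by (rule h(1))
    fix A B assume "A \<in> sets G" "B \<in> sets H"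
    thus "AE x in M. cond_mix_dev M C A B x \<le> h x" using h(2) mem by blast
  next
    fix h' :: "'a \<Rightarrow> real" assume h': "h' \<in> borel_measurable M"
      "\<forall>A\<in>sets G. \<forall>B\<in>sets H. AE x in M. cond_mix_dev M C A B x \<le> h' x"
    have "\<forall>f\<in>F. AE x in M. f x \<le> h' x"
    proof
      fix f assume "f \<in> F"
      then obtain A B where "A \<in> sets G" "B \<in> sets H" "f = cond_mix_dev M C A B"
        unfolding F_def by blast
      thus "AE x in M. f x \<le> h' x" using h'(2) by blast
    qed
    thus "AE x in M. h x \<le> h' x" using h(3) h'(1) by blast
  qed
  thus ?thesis unfolding cond_alpha_def by (rule someI[of "is_cond_alpha M C G H" h])
qed

lemma alpha_ge: "A \<in> sets G \<Longrightarrow> B \<in> sets H \<Longrightarrow> AE x in M. \<bar>cov (indicator A) (indicator B) x\<bar> \<le> alpha x"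
proof -
  assume "A \<in> sets G" "B \<in> sets H"
  hence "AE x in M. cond_mix_dev M C A B x \<le> alpha x" using alpha_ex unfolding is_cond_alpha_def by blast
  thus ?thesis unfolding dev_cov .
qed

end



lemma le_of_Suc_bound:
  fixes a b :: real assumes "\<And>m. a \<le> b + 2 / real (Suc m)" shows "a \<le> b"
proof (rule field_le_epsilon)
  fix e :: real assume "0 < e"
  then obtain n where n: "n > 0" "inverse (real n) < e/2"
    using ex_inverse_of_nat_less[of "e/2"] by auto
  then obtain m where m: "n = Suc m" using not0_implies_Suc by blast
  have "2 / real (Suc m) = 2 * inverse (real n)" by (simp add: m inverse_eq_divide)
  also have "\<dots> < e" using n by linarith
  finally show "a \<le> b + e" using assms[of m] by linarith
qed

context cset
begin

lemma covB:
  assumes A: "A \<in> sets G" and psim: "\<psi> \<in> borel_measurable H"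
    and psib: "\<And>x. x \<in> space M \<Longrightarrow> 0 \<le> \<psi> x \<and> \<psi> x \<le> 1"
  shows "AE x in M. \<bar>cov (indicator A) \<psi> x\<bar> \<le> alpha x"
proof -
  have AM: "A \<in> sets M" using A setsGM by blast
  have ba: "bd (indicator A)" using AM by (rule bd_ind)
  have psiM: "\<psi> \<in> borel_measurable M" using psim by (rule mHM)
  have "AE x in M. \<bar>\<psi> x\<bar> \<le> 1" by (rule AE_I2) (use psib in fastforce)
  hence bpsi: "bd \<psi>" by (rule bdI[OF psiM])
  have aA: "AE x in M. \<bar>indicator A x\<bar> \<le> (1::real)" by (rule AE_I2) (simp add: indicator_def)
  have step: "AE x in M. \<bar>cov (indicator A) \<psi> x\<bar> \<le> alpha x + 2 / real (Suc m)" for m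
  proof -
    define k where "k = Suc m"
    have kpos: "real k > 0" by (simp add: k_def)
    define B where "B j = {y \<in> space M. real j / real k \<le> \<psi> y}" for j :: nat
    have BH: "B j \<in> sets H" for j
    proof -
      have "{y \<in> space H. real j / real k \<le> \<psi> y} \<in> sets H" using psim by measurable
      thus ?thesis unfolding B_def spaceH .
    qed
    have BM: "B j \<in> sets M" for j using BH setsHM by blast
    have bB: "bd (indicator (B j))" for j using BM by (rule bd_ind)
    define pk where "pk = (\<lambda>y. (\<Sum>j\<in>{1..k}. indicator (B j) y) / real k)"
    have pkm: "pk \<in> borel_measurable M" unfolding pk_def
      by (intro borel_measurable_divide borel_measurable_sum borel_measurable_indicator BM borel_measurable_const)
    have approx: "\<bar>\<psi> y - pk y\<bar> \<le> 1 / real k" if y: "y \<in> space M" for y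
    proof -
      define t where "t = real k * \<psi> y"
      have t: "0 \<le> t" "t \<le> real k" using psib[OF y] kpos by (simp_all add: t_def mult_left_le)
      have ind: "indicator (B j) y = (if real j \<le> t then 1 else (0::real))" for j
      proof -
        have "(real j / real k \<le> \<psi> y) = (real j \<le> t)"
          using kpos by (simp add: t_def pos_divide_le_eq mult.commute)
        thus ?thesis using y by (simp add: B_def indicator_def)
      qed
      have "(\<Sum>j\<in>{1..k}. indicator (B j) y) = (of_int \<lfloor>t\<rfloor> :: real)" unfolding ind by (rule floor_count[OF t])
      hence pk: "pk y = of_int \<lfloor>t\<rfloor> / real k" unfolding pk_def by simp
      have "\<psi> y = t / real k" using kpos by (simp add: t_def)
      hence eq: "\<psi> y - pk y = (t - of_int \<lfloor>t\<rfloor>) / real k" using pk by (simp add: diff_divide_distrib)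
      have fl: "0 \<le> t - of_int \<lfloor>t\<rfloor>" "t - of_int \<lfloor>t\<rfloor> \<le> 1" using floor_correct[of t] by linarith+
      have "\<bar>\<psi> y - pk y\<bar> = (t - of_int \<lfloor>t\<rfloor>) / real k" unfolding eq using fl kpos by simp
      also have "\<dots> \<le> 1 / real k" using fl kpos by (intro divide_right_mono) simp_all
      finally show ?thesis .
    qed
    have "AE x in M. \<bar>pk x\<bar> \<le> 2"
    proof (rule AE_I2)
      fix x assume x: "x \<in> space M"
      have "1 / real k \<le> 1" using kpos by simp
      thus "\<bar>pk x\<bar> \<le> 2" using approx[OF x] psib[OF x] by linarith
    qed
    hence bpk: "bd pk" by (rule bdI[OF pkm])
    have bdd: "bd (\<lambda>y. \<psi> y - pk y)" by (rule bd_diff[OF bpsi bpk])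
    have dB: "AE x in M. \<bar>\<psi> x - pk x\<bar> \<le> 1 / real k" by (rule AE_I2) (rule approx)
    have e3: "AE x in M. \<bar>cov (indicator A) (\<lambda>y. \<psi> y - pk y) x\<bar> \<le> 2 * (1 / real k)"
      by (rule cov_bound[OF ba bdd aA dB])
    have e4: "AE x in M. cov (indicator A) (\<lambda>y. \<psi> y - pk y) x = cov (indicator A) \<psi> x - cov (indicator A) pk x"
      by (rule cov_diff2[OF ba bpsi bpk])
    have e2: "AE x in M. \<forall>j\<in>{1..k}. \<bar>cov (indicator A) (indicator (B j)) x\<bar> \<le> alpha x"
      by (rule AE_ball_countable') (rule alpha_ge[OF A BH], simp)
    have e1: "AE x in M. cov (indicator A) pk x = (\<Sum>j\<in>{1..k}. cov (indicator A) (indicator (B j)) x) / real k"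
    proof -
      interpret sigma_finite_subalgebra M C by (rule sfC)
      have f1: "(\<lambda>y. indicator A y * pk y) = (\<lambda>y. (\<Sum>j\<in>{1..k}. indicator A y * indicator (B j) y) / real k)"
        by (simp add: pk_def sum_distrib_left)
      have i1: "AE x in M. EC (\<lambda>y. (\<Sum>j\<in>{1..k}. indicator A y * indicator (B j) y) / real k) x
          = EC (\<lambda>y. \<Sum>j\<in>{1..k}. indicator A y * indicator (B j) y) x / real k"
        by (rule real_cond_exp_cdiv[where f="\<lambda>y. \<Sum>j\<in>{1..k}. indicator A y * indicator (B j) y"],
            rule Bochner_Integration.integrable_sum, rule bd_int, rule bd_mult[OF ba bB])
      have i2: "AE x in M. EC (\<lambda>y. \<Sum>j\<in>{1..k}. indicator A y * indicator (B j) y) x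
          = (\<Sum>j\<in>{1..k}. EC (\<lambda>y. indicator A y * indicator (B j) y) x)"
        by (rule real_cond_exp_sum[where f="\<lambda>j y. indicator A y * indicator (B j) y"]) (intro bd_int bd_mult ba bB)
      have i3: "AE x in M. EC pk x = EC (\<lambda>y. \<Sum>j\<in>{1..k}. indicator (B j) y) x / real k"
        unfolding pk_def by (rule real_cond_exp_cdiv[where f="\<lambda>y. \<Sum>j\<in>{1..k}. indicator (B j) y"],
            rule Bochner_Integration.integrable_sum, rule bd_int, rule bB)
      have i4: "AE x in M. EC (\<lambda>y. \<Sum>j\<in>{1..k}. indicator (B j) y) x
          = (\<Sum>j\<in>{1..k}. EC (indicator (B j)) x)"
        by (rule real_cond_exp_sum[where f="\<lambda>j. indicator (B j)"]) (intro bd_int bB)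
      show ?thesis using i1 i2 i3 i4 unfolding cov_def f1
      proof eventually_elim
        case (elim x)
        have s: "(\<Sum>j\<in>{1..k}. EC (\<lambda>y. indicator A y * indicator (B j) y) x - EC (indicator A) x * EC (indicator (B j)) x)
          = (\<Sum>j\<in>{1..k}. EC (\<lambda>y. indicator A y * indicator (B j) y) x) - EC (indicator A) x * (\<Sum>j\<in>{1..k}. EC (indicator (B j)) x)"
          by (simp add: sum_subtractf sum_distrib_left)
        show ?case unfolding s elim by (simp add: diff_divide_distrib)
      qed
    qed
    show ?thesis using e1 e2 e3 e4
    proof eventually_elim
      case (elim x)
      have "\<bar>\<Sum>j\<in>{1..k}. cov (indicator A) (indicator (B j)) x\<bar> \<le> (\<Sum>j\<in>{1..k}. \<bar>cov (indicator A) (indicator (B j)) x\<bar>)"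
        by (rule sum_abs)
      also have "\<dots> \<le> (\<Sum>j\<in>{1..k}. alpha x)" using elim(2) by (intro sum_mono) blast
      also have "\<dots> = real k * alpha x" by simp
      finally have s: "\<bar>\<Sum>j\<in>{1..k}. cov (indicator A) (indicator (B j)) x\<bar> \<le> real k * alpha x" .
      have "\<bar>cov (indicator A) pk x\<bar> = \<bar>\<Sum>j\<in>{1..k}. cov (indicator A) (indicator (B j)) x\<bar> / real k"
        unfolding elim(1) using kpos by simp
      also have "\<dots> \<le> real k * alpha x / real k" using s kpos by (intro divide_right_mono) simp_all
      also have "\<dots> = alpha x" using kpos by simp
      finally have c1: "\<bar>cov (indicator A) pk x\<bar> \<le> alpha x" .
      have c2: "\<bar>cov (indicator A) \<psi> x - cov (indicator A) pk x\<bar> \<le> 2 / real (Suc m)"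
        using elim(3) unfolding elim(4) by (simp add: k_def)
      show ?case using c1 c2 by linarith
    qed
  qed
  have "AE x in M. \<forall>m. \<bar>cov (indicator A) \<psi> x\<bar> \<le> alpha x + 2 / real (Suc m)"
    by (subst AE_all_countable) (use step in blast)
  thus ?thesis by eventually_elim (rule le_of_Suc_bound, blast)
qed


lemma covB2:
  assumes A: "A \<in> sets G" and phim: "\<phi> \<in> borel_measurable H"
    and phib: "\<And>x. x \<in> space M \<Longrightarrow> \<bar>\<phi> x\<bar> \<le> 1"
  shows "AE x in M. \<bar>cov (indicator A) \<phi> x\<bar> \<le> 2 * alpha x"
proof -
  define \<psi> where "\<psi> = (\<lambda>y. (\<phi> y + 1) / 2)"
  have psim: "\<psi> \<in> borel_measurable H" unfolding \<psi>_def using phim by measurable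
  have psib: "0 \<le> \<psi> x \<and> \<psi> x \<le> 1" if "x \<in> space M" for x
    using phib[OF that] unfolding \<psi>_def by (simp add: abs_le_iff)
  have ba: "bd (indicator A)" using A setsGM bd_ind by blast
  have "AE x in M. \<bar>\<psi> x\<bar> \<le> 1" by (rule AE_I2) (use psib in fastforce)
  hence bpsi: "bd \<psi>" by (rule bdI[OF mHM[OF psim]])
  have b2: "bd (\<lambda>y. 2 * \<psi> y)" by (rule bd_cmult[OF bpsi])
  have phi_eq: "\<phi> = (\<lambda>y. 2 * \<psi> y - 1)" by (rule ext) (simp add: \<psi>_def field_simps)
  have 1: "AE x in M. cov (indicator A) (\<lambda>y. 2 * \<psi> y - 1) x = cov (indicator A) (\<lambda>y. 2 * \<psi> y) x - cov (indicator A) (\<lambda>y. 1) x"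
    by (rule cov_diff2[OF ba b2 bd_const])
  have 2: "AE x in M. cov (indicator A) (\<lambda>y. 2 * \<psi> y) x = 2 * cov (indicator A) \<psi> x"
    by (rule cov_cmult2[OF ba bpsi])
  have 3: "AE x in M. cov (indicator A) (\<lambda>y. 1) x = 0"
    by (rule cov_const2[OF ba])
  have 4: "AE x in M. \<bar>cov (indicator A) \<psi> x\<bar> \<le> alpha x"
    by (rule covB[OF A psim psib])
  show ?thesis unfolding phi_eq using 1 2 3 4 by eventually_elim (simp add: abs_mult)
qed

lemma covC:
  assumes A: "A \<in> sets G" and fm: "f \<in> borel_measurable H" and gm: "g \<in> borel_measurable C"
    and fg: "AE x in M. \<bar>f x\<bar> \<le> g x" and gK: "AE x in M. \<bar>g x\<bar> \<le> K"
  shows "AE x in M. \<bar>cov (indicator A) f x\<bar> \<le> 2 * alpha x * g x"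
proof -
  define \<phi> where "\<phi> = (\<lambda>y. max (-1) (min 1 (f y / g y)))"
  have gH: "g \<in> borel_measurable H" by (rule mCH[OF gm])
  have phim: "\<phi> \<in> borel_measurable H" unfolding \<phi>_def using fm gH by measurable
  have phib: "\<bar>\<phi> x\<bar> \<le> 1" for x unfolding \<phi>_def by simp
  have ba: "bd (indicator A)" using A setsGM bd_ind by blast
  have "AE x in M. \<bar>\<phi> x\<bar> \<le> 1" by (rule AE_I2) (rule phib)
  hence bphi: "bd \<phi>" by (rule bdI[OF mHM[OF phim]])
  have bg: "bd g" by (rule bdI[OF mCM[OF gm] gK])
  have "AE x in M. \<bar>f x\<bar> \<le> K" using fg gK by eventually_elim linarith
  hence bf: "bd f" by (rule bdI[OF mHM[OF fm]])
  have bgphi: "bd (\<lambda>y. g y * \<phi> y)" by (rule bd_mult[OF bg bphi])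
  have feq: "AE x in M. f x = g x * \<phi> x" using fg
  proof eventually_elim
    case (elim x)
    show ?case
    proof (cases "g x = 0")
      case True thus ?thesis using elim by simp
    next
      case False
      hence gp: "g x > 0" using elim abs_ge_zero[of "f x"] by linarith
      have "\<bar>f x / g x\<bar> \<le> 1" using elim gp by (simp add: abs_div)
      hence "-1 \<le> f x / g x" "f x / g x \<le> 1" unfolding abs_le_iff by linarith+
      hence "\<phi> x = f x / g x" unfolding \<phi>_def by simp
      thus ?thesis using gp by simp
    qed
  qed
  have 1: "AE x in M. cov (indicator A) f x = cov (indicator A) (\<lambda>y. g y * \<phi> y) x"
    by (rule cov_cong[OF feq ba bf bgphi])
  have 2: "AE x in M. cov (indicator A) (\<lambda>y. g y * \<phi> y) x = g x * cov (indicator A) \<phi> x"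
    by (rule cov_Cmult2[OF ba bphi bg gm])
  have 3: "AE x in M. \<bar>cov (indicator A) \<phi> x\<bar> \<le> 2 * alpha x"
    by (rule covB2[OF A phim]) (rule phib)
  show ?thesis using 1 2 3 fg
  proof eventually_elim
    case (elim x)
    have g0: "0 \<le> g x" using elim(4) by (meson abs_ge_zero order_trans)
    have "\<bar>cov (indicator A) f x\<bar> = g x * \<bar>cov (indicator A) \<phi> x\<bar>"
      using elim(1,2) g0 by (simp add: abs_mult)
    also have "\<dots> \<le> g x * (2 * alpha x)" using elim(3) g0 by (rule mult_left_mono)
    finally show ?case by (simp add: mult.commute mult.left_commute)
  qed
qed

lemma boundedD:
  assumes fm: "f \<in> borel_measurable H" and gm: "g \<in> borel_measurable C"
    and fg: "AE x in M. \<bar>f x\<bar> \<le> g x" and gK: "AE x in M. \<bar>g x\<bar> \<le> K"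
  shows "AE x in M. EC (\<lambda>y. \<bar>EG f y - EC f y\<bar>) x \<le> 4 * alpha x * g x"
proof -
  interpret Cc: sigma_finite_subalgebra M C by (rule sfC)
  interpret Gg: sigma_finite_subalgebra M G by (rule sfG)
  have "AE x in M. \<bar>f x\<bar> \<le> K" using fg gK by eventually_elim linarith
  hence bf: "bd f" by (rule bdI[OF mHM[OF fm]])
  have bEG: "bd (EG f)" by (rule bd_EG[OF bf])
  have bEC: "bd (EC f)" by (rule bd_EC[OF bf])
  define u where "u = (\<lambda>y. EG f y - EC f y)"
  have bu: "bd u" unfolding u_def by (rule bd_diff[OF bEG bEC])
  have uG: "u \<in> borel_measurable G" unfolding u_def
    by (intro borel_measurable_diff borel_measurable_cond_exp mCG)
  define A where "A = {y \<in> space M. 0 \<le> u y}"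
  have AG: "A \<in> sets G"
  proof -
    have "{y \<in> space G. 0 \<le> u y} \<in> sets G" using uG by measurable
    thus ?thesis unfolding A_def spaceG .
  qed
  have AM: "A \<in> sets M" using AG by (rule setsGM)
  define a where "a = (indicator A :: 'a \<Rightarrow> real)"
  have ba: "bd a" unfolding a_def by (rule bd_ind[OF AM])
  have aG: "a \<in> borel_measurable G" unfolding a_def using AG by measurable
  have aC0: "a \<in> borel_measurable M" by (rule bd_meas[OF ba])
  define w where "w = (\<lambda>y. 2 * (a y * u y) - u y)"
  have bau: "bd (\<lambda>y. a y * u y)" by (rule bd_mult[OF ba bu])
  have b2au: "bd (\<lambda>y. 2 * (a y * u y))" by (rule bd_cmult[OF bau])
  have bw: "bd w" unfolding w_def by (rule bd_diff[OF b2au bu])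
  have babs: "bd (\<lambda>y. \<bar>u y\<bar>)"
  proof -
    obtain K' where "AE x in M. \<bar>u x\<bar> \<le> K'" using bu unfolding bd_def by blast
    hence "AE x in M. \<bar>\<bar>u x\<bar>\<bar> \<le> K'" by simp
    thus ?thesis by (rule bdI[OF borel_measurable_abs[OF bd_meas[OF bu]]])
  qed
  have abs_w: "AE x in M. \<bar>u x\<bar> = w x"
  proof (rule AE_I2)
    fix x assume "x \<in> space M"
    thus "\<bar>u x\<bar> = w x" unfolding w_def a_def A_def by (auto simp: indicator_def)
  qed
  have s1: "AE x in M. EC (\<lambda>y. \<bar>u y\<bar>) x = EC w x"
    by (rule Cc.real_cond_exp_cong[OF abs_w bd_meas[OF babs] bd_meas[OF bw]])
  have s2: "AE x in M. EC w x = EC (\<lambda>y. 2 * (a y * u y)) x - EC u x"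
    unfolding w_def by (rule Cc.real_cond_exp_diff[OF bd_int[OF b2au] bd_int[OF bu]])
  have s3: "AE x in M. EC (\<lambda>y. 2 * (a y * u y)) x = 2 * EC (\<lambda>y. a y * u y) x"
    by (rule Cc.real_cond_exp_cmult[OF bd_int[OF bau]])
  have bag: "bd (\<lambda>y. a y * EG f y)" by (rule bd_mult[OF ba bEG])
  have bac: "bd (\<lambda>y. a y * EC f y)" by (rule bd_mult[OF ba bEC])
  have s4: "AE x in M. EC (\<lambda>y. a y * u y) x = EC (\<lambda>y. a y * EG f y) x - EC (\<lambda>y. a y * EC f y) x"
  proof -
    have "(\<lambda>y. a y * u y) = (\<lambda>y. a y * EG f y - a y * EC f y)" unfolding u_def by (simp add: right_diff_distrib)
    thus ?thesis by (simp only:) (rule Cc.real_cond_exp_diff[OF bd_int[OF bag] bd_int[OF bac]])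
  qed
  have baf: "bd (\<lambda>y. a y * f y)" by (rule bd_mult[OF ba bf])
  have s5: "AE x in M. EG (\<lambda>y. a y * f y) x = a x * EG f x"
    by (rule Gg.real_cond_exp_mult[OF aG bd_meas[OF bf] bd_int[OF baf]])
  have s6: "AE x in M. EC (\<lambda>y. a y * EG f y) x = EC (EG (\<lambda>y. a y * f y)) x"
    by (rule Cc.real_cond_exp_cong) (use s5 bag in \<open>auto intro: bd_meas\<close>)
  have s7: "AE x in M. EC (EG (\<lambda>y. a y * f y)) x = EC (\<lambda>y. a y * f y) x"
    by (rule Cc.real_cond_exp_nested_subalg[OF subG subGC bd_int[OF baf]])
  have s8: "AE x in M. EC (\<lambda>y. EC f y * a y) x = EC f x * EC a x"
    by (rule Cc.real_cond_exp_mult[OF borel_measurable_cond_exp aC0]) (use bd_int[OF bd_mult[OF bEC ba]] in simp)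
  have s9: "AE x in M. EC u x = EC (EG f) x - EC (EC f) x"
    unfolding u_def by (rule Cc.real_cond_exp_diff[OF bd_int[OF bEG] bd_int[OF bEC]])
  have s10: "AE x in M. EC (EG f) x = EC f x"
    by (rule Cc.real_cond_exp_nested_subalg[OF subG subGC bd_int[OF bf]])
  have s11: "AE x in M. EC (EC f) x = EC f x"
    by (rule Cc.real_cond_exp_F_meas[OF bd_int[OF bEC] borel_measurable_cond_exp])
  have s12: "AE x in M. \<bar>cov a f x\<bar> \<le> 2 * alpha x * g x"
    unfolding a_def by (rule covC[OF AG fm gm fg gK])
  have comm: "(\<lambda>y. a y * EC f y) = (\<lambda>y. EC f y * a y)" by (simp add: mult.commute)
  show ?thesis using s1 s2 s3 s4 s6 s7 s8 s9 s10 s11 s12 unfolding comm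
  proof eventually_elim
    case (elim x)
    have ueq: "(\<lambda>y. \<bar>EG f y - EC f y\<bar>) = (\<lambda>y. \<bar>u y\<bar>)" unfolding u_def ..
    have "EC (\<lambda>y. \<bar>EG f y - EC f y\<bar>) x = 2 * cov a f x"
      using elim(1-10) unfolding cov_def ueq by (simp add: mult.commute)
    thus ?case using elim(11) by (simp add: abs_le_iff mult.commute mult.left_commute)
  qed
qed

lemma nn_real:
  assumes bh: "bd h" and h0: "\<And>x. 0 \<le> h x"
  shows "AE x in M. nn_cond_exp M C (\<lambda>y. ennreal (h y)) x = ennreal (EC h x)"
proof -
  interpret Cc: sigma_finite_subalgebra M C by (rule sfC)
  have hm: "h \<in> borel_measurable M" by (rule bd_meas[OF bh])
  have zero: "(\<lambda>y. ennreal (- h y)) = (\<lambda>y. 0)" using h0 by (simp add: ennreal_neg)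
  have z: "AE x in M. nn_cond_exp M C (\<lambda>y. 0) x = 0"
  proof -
    have "AE x in M. (\<lambda>y. 0::ennreal) x = nn_cond_exp M C (\<lambda>y. 0) x"
      by (rule Cc.nn_cond_exp_charact) auto
    thus ?thesis by auto
  qed
  have "(\<integral>\<^sup>+ x. 1 * nn_cond_exp M C (\<lambda>y. ennreal (h y)) x \<partial>M) = (\<integral>\<^sup>+ x. 1 * ennreal (h x) \<partial>M)"
    by (rule Cc.nn_cond_exp_intg) (use hm in auto)
  also have "\<dots> < \<infinity>"
  proof -
    have "integrable M h" by (rule bd_int[OF bh])
    hence "(\<integral>\<^sup>+ x. ennreal (norm (h x)) \<partial>M) < \<infinity>" by (simp add: integrable_iff_bounded)
    thus ?thesis using h0 by simp
  qed
  finally have "(\<integral>\<^sup>+ x. nn_cond_exp M C (\<lambda>y. ennreal (h y)) x \<partial>M) \<noteq> \<infinity>" by simp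
  hence fin: "AE x in M. nn_cond_exp M C (\<lambda>y. ennreal (h y)) x \<noteq> \<infinity>"
    by (intro nn_integral_PInf_AE) auto
  show ?thesis using fin z unfolding real_cond_exp_def zero
    by eventually_elim (simp add: ennreal_enn2real_if)
qed

end



lemma meas_gen:
  fixes X :: "nat \<Rightarrow> 'a \<Rightarrow> real"
  assumes [measurable]: "\<And>i. X i \<in> borel_measurable M"
  shows "(\<lambda>x. if convergent (\<lambda>i. X i x) then lim (\<lambda>i. X i x) else 0) \<in> borel_measurable M"
proof -
  have [measurable]: "Measurable.pred M (\<lambda>x. convergent (\<lambda>i. X i x))"
    unfolding Cauchy_convergent_iff[symmetric] Cauchy_iff2 by measurable
  show ?thesis by measurable
qed

lemma trunc_eq: "trunc_fun g f n = (\<lambda>y. if g y \<le> real n then f y else 0)"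
  unfolding trunc_fun_def by (rule ext) (simp add: indicator_def)

context cset
begin

lemma bd_abs: assumes "bd f" shows "bd (\<lambda>y. \<bar>f y\<bar>)"
proof -
  obtain K' where "AE x in M. \<bar>f x\<bar> \<le> K'" using assms unfolding bd_def by blast
  hence "AE x in M. \<bar>\<bar>f x\<bar>\<bar> \<le> K'" by simp
  thus ?thesis by (rule bdI[OF borel_measurable_abs[OF bd_meas[OF assms]]])
qed

lemma bd_trunc:
  assumes fM: "f \<in> borel_measurable M" and gM: "g \<in> borel_measurable M" and fg: "AE x in M. \<bar>f x\<bar> \<le> g x"
  shows "bd (trunc_fun g f m)"
proof -
  have "trunc_fun g f m \<in> borel_measurable M" unfolding trunc_eq using fM gM by measurable
  moreover have "AE x in M. \<bar>trunc_fun g f m x\<bar> \<le> real m" using fg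
    by eventually_elim (simp add: trunc_eq)
  ultimately show ?thesis by (rule bdI)
qed

lemma gen_eq:
  assumes sf: "sigma_finite_subalgebra M S" and gS: "g \<in> borel_measurable S"
    and fM: "f \<in> borel_measurable M" and gM: "g \<in> borel_measurable M" and fg: "AE x in M. \<bar>f x\<bar> \<le> g x"
  shows "AE y in M. g y \<le> real n \<longrightarrow> gen_cond_exp M S g f y = real_cond_exp M S (trunc_fun g f n) y"
proof -
  interpret S: sigma_finite_subalgebra M S by (rule sf)
  define ind where "ind = (\<lambda>y. if g y \<le> real n then 1 else (0::real))"
  have indS: "ind \<in> borel_measurable S" unfolding ind_def using gS by measurable
  have one: "AE y in M. real_cond_exp M S (trunc_fun g f n) y = ind y * real_cond_exp M S (trunc_fun g f m) y"
    if nm: "n \<le> m" for m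
  proof -
    have eq: "trunc_fun g f n = (\<lambda>y. ind y * trunc_fun g f m y)"
    proof (rule ext)
      fix y
      have "real n \<le> real m" using nm by simp
      thus "trunc_fun g f n y = ind y * trunc_fun g f m y" unfolding trunc_eq ind_def by auto
    qed
    show ?thesis unfolding eq
      by (rule S.real_cond_exp_mult[OF indS bd_meas[OF bd_trunc[OF fM gM fg]]])
        (use bd_int[OF bd_trunc[OF fM gM fg, of n]] eq in simp)
  qed
  have "AE y in M. \<forall>m. n \<le> m \<longrightarrow> real_cond_exp M S (trunc_fun g f n) y = ind y * real_cond_exp M S (trunc_fun g f m) y"
  proof (subst AE_all_countable, intro allI)
    fix m show "AE y in M. n \<le> m \<longrightarrow> real_cond_exp M S (trunc_fun g f n) y = ind y * real_cond_exp M S (trunc_fun g f m) y"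
      using one[of m] by (cases "n \<le> m") auto
  qed
  thus ?thesis
  proof eventually_elim
    case (elim y)
    show ?case
    proof
      assume gy: "g y \<le> real n"
      define c where "c = real_cond_exp M S (trunc_fun g f n) y"
      have ev: "\<forall>m\<ge>n. real_cond_exp M S (trunc_fun g f m) y = c"
        using elim gy unfolding c_def ind_def by auto
      have lim: "(\<lambda>m. real_cond_exp M S (trunc_fun g f m) y) \<longlonglongrightarrow> c"
        by (rule tendsto_eventually) (use ev in \<open>auto simp: eventually_sequentially\<close>)
      hence "convergent (\<lambda>m. real_cond_exp M S (trunc_fun g f m) y)" by (rule convergentI)
      moreover have "lim (\<lambda>m. real_cond_exp M S (trunc_fun g f m) y) = c" using lim by (rule limI)
      ultimately show "gen_cond_exp M S g f y = real_cond_exp M S (trunc_fun g f n) y"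
        unfolding gen_cond_exp_def c_def by simp
    qed
  qed
qed

lemma gen_meas: "gen_cond_exp M S g f \<in> borel_measurable M"
proof -
  have "gen_cond_exp M S g f = (\<lambda>x. if convergent (\<lambda>i. real_cond_exp M S (trunc_fun g f i) x)
      then lim (\<lambda>i. real_cond_exp M S (trunc_fun g f i) x) else 0)"
    by (rule ext) (simp add: gen_cond_exp_def)
  also have "\<dots> \<in> borel_measurable M" by (rule meas_gen) (rule borel_measurable_cond_exp2)
  finally show ?thesis .
qed

lemma final:
  assumes fm: "f \<in> borel_measurable H" and gm: "g \<in> borel_measurable C"
    and fg: "AE x in M. \<bar>f x\<bar> \<le> g x"
  shows "AE x in M. nn_cond_exp M C (\<lambda>y. ennreal \<bar>gen_cond_exp M G g f y - gen_cond_exp M C g f y\<bar>) x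
           \<le> ennreal (4 * alpha x * g x)"
proof -
  interpret Cc: sigma_finite_subalgebra M C by (rule sfC)
  have fM: "f \<in> borel_measurable M" by (rule mHM[OF fm])
  have gM: "g \<in> borel_measurable M" by (rule mCM[OF gm])
  have gG: "g \<in> borel_measurable G" by (rule mCG[OF gm])
  have gH: "g \<in> borel_measurable H" by (rule mCH[OF gm])
  define V where "V = (\<lambda>y. ennreal \<bar>gen_cond_exp M G g f y - gen_cond_exp M C g f y\<bar>)"
  have Vm: "V \<in> borel_measurable M" unfolding V_def using gen_meas[of G g f] gen_meas[of C g f] by measurable
  have step: "AE x in M. g x \<le> real n \<longrightarrow> nn_cond_exp M C V x \<le> ennreal (4 * alpha x * g x)" for n
  proof -
    define fn where "fn = trunc_fun g f n"
    define gn where "gn = (\<lambda>y. if g y \<le> real n then g y else 0)"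
    have fnH: "fn \<in> borel_measurable H" unfolding fn_def trunc_eq using fm gH by measurable
    have gnC: "gn \<in> borel_measurable C" unfolding gn_def using gm by measurable
    have fngn: "AE x in M. \<bar>fn x\<bar> \<le> gn x" using fg
      by eventually_elim (simp add: fn_def gn_def trunc_eq)
    have gnK: "AE x in M. \<bar>gn x\<bar> \<le> real n" using fg
    proof eventually_elim
      case (elim x)
      have "0 \<le> g x" using elim abs_ge_zero[of "f x"] by linarith
      thus ?case by (simp add: gn_def)
    qed
    have B: "AE x in M. EC (\<lambda>y. \<bar>EG fn y - EC fn y\<bar>) x \<le> 4 * alpha x * gn x"
      by (rule boundedD[OF fnH gnC fngn gnK])
    have bfn: "bd fn" unfolding fn_def by (rule bd_trunc[OF fM gM fg])
    define h where "h = (\<lambda>y. \<bar>EG fn y - EC fn y\<bar>)"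
    have bh: "bd h" unfolding h_def by (rule bd_abs[OF bd_diff[OF bd_EG[OF bfn] bd_EC[OF bfn]]])
    have N: "AE x in M. nn_cond_exp M C (\<lambda>y. ennreal (h y)) x = ennreal (EC h x)"
      by (rule nn_real[OF bh]) (simp add: h_def)
    have eG: "AE y in M. g y \<le> real n \<longrightarrow> gen_cond_exp M G g f y = EG fn y"
      unfolding fn_def by (rule gen_eq[OF sfG gG fM gM fg])
    have eC: "AE y in M. g y \<le> real n \<longrightarrow> gen_cond_exp M C g f y = EC fn y"
      unfolding fn_def by (rule gen_eq[OF sfC gm fM gM fg])
    define i where "i = (\<lambda>y. if g y \<le> real n then 1 else (0::ennreal))"
    have iC: "i \<in> borel_measurable C" unfolding i_def using gm by measurable
    have iM: "i \<in> borel_measurable M" unfolding i_def using gM by measurable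
    have hM: "h \<in> borel_measurable M" by (rule bd_meas[OF bh])
    have P1: "AE x in M. i x * nn_cond_exp M C V x = nn_cond_exp M C (\<lambda>y. i y * V y) x"
      by (rule Cc.nn_cond_exp_prod[OF iC Vm])
    have P2: "AE x in M. nn_cond_exp M C (\<lambda>y. i y * V y) x = nn_cond_exp M C (\<lambda>y. i y * ennreal (h y)) x"
    proof (rule Cc.nn_cond_exp_cong)
      show "AE x in M. i x * V x = i x * ennreal (h x)" using eG eC
        by eventually_elim (simp add: i_def V_def h_def)
      show "(\<lambda>y. i y * V y) \<in> borel_measurable M" using iM Vm by measurable
      show "(\<lambda>y. i y * ennreal (h y)) \<in> borel_measurable M" using iM hM by measurable
    qed
    have P3: "AE x in M. nn_cond_exp M C (\<lambda>y. i y * ennreal (h y)) x \<le> nn_cond_exp M C (\<lambda>y. ennreal (h y)) x"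
    proof (rule Cc.nn_cond_exp_mono)
      show "AE x in M. i x * ennreal (h x) \<le> ennreal (h x)" by (rule AE_I2) (simp add: i_def)
      show "(\<lambda>y. i y * ennreal (h y)) \<in> borel_measurable M" using iM hM by measurable
      show "(\<lambda>y. ennreal (h y)) \<in> borel_measurable M" using hM by measurable
    qed
    show ?thesis using P1 P2 P3 N B
    proof eventually_elim
      case (elim x)
      show ?case
      proof
        assume gx: "g x \<le> real n"
        have "nn_cond_exp M C V x = i x * nn_cond_exp M C V x" using gx by (simp add: i_def)
        also have "\<dots> \<le> nn_cond_exp M C (\<lambda>y. ennreal (h y)) x" using elim(1-3) by simp
        also have "\<dots> = ennreal (EC h x)" by (rule elim(4))
        also have "\<dots> \<le> ennreal (4 * alpha x * g x)"
          using elim(5) gx by (intro ennreal_leI) (simp add: h_def gn_def)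
        finally show "nn_cond_exp M C V x \<le> ennreal (4 * alpha x * g x)" .
      qed
    qed
  qed
  have "AE x in M. \<forall>n. g x \<le> real n \<longrightarrow> nn_cond_exp M C V x \<le> ennreal (4 * alpha x * g x)"
    by (subst AE_all_countable) (use step in blast)
  thus ?thesis unfolding V_def[symmetric]
  proof eventually_elim
    case (elim x)
    obtain n where "g x \<le> real n" using real_arch_simple by blast
    thus ?case using elim by blast
  qed
qed

end

theorem corollary4p8:
  fixes M C G H :: "'a measure" and f g :: "'a \<Rightarrow> real"
  assumes "prob_space M"
    and "subalgebra M C" and "subalgebra M G" and "subalgebra M H"
    and "sets C \<subseteq> sets G" and "sets C \<subseteq> sets H"
    and "f \<in> borel_measurable H"
    and "g \<in> borel_measurable C"
    and "AE x in M. \<bar>f x\<bar> \<le> g x"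
  shows "AE x in M.
           nn_cond_exp M C (\<lambda>y. ennreal \<bar>gen_cond_exp M G g f y - gen_cond_exp M C g f y\<bar>) x
             \<le> ennreal (4 * cond_alpha M C G H x * g x)"
proof -
  have "cset M C G H"
    by (rule cset.intro[OF assms(1)], rule cset_axioms.intro) (rule assms)+
  then interpret cset M C G H .
  show ?thesis by (rule final[OF assms(7,8,9)])
qed


end
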